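(* Let $N$ firms have outputs $x_i\in K_i\subseteq[0,\infty)$, $K=\prod_iK_i$, $X=\sum_{i=1}^Nx_i$, let $b^*>0$, $\sigma>1$, and for a parameter $\theta=a\in\Theta$ define $F(x;\theta)$ by $F_i(x;\theta)=c_i'(x_i)-(\theta-b^*X^\sigma)+\sigma b^*X^{\sigma-1}x_i$. Suppose each $c_i$ is convex and continuously differentiable with $c_i'$ Lipschitz continuous on $K_i$, each $K_i$ is nonempty, closed, convex and bounded, $\Theta=[\delta,\Delta]$ with $0<\delta<\Delta$, and $X\ge\eta$ for some $\eta>0$ and all $x\in K$. If $N<\frac{3\sigma-1}{\sigma-1}$, then: (a) if $x(\theta)$ denotes the solution of VI$(K,F(\cdot;\theta))$, then $x(\theta)$ is Lipschitz continuous in $\theta$ on $\Theta$; (b) for $\epsilon>0$, if $x(\theta,\epsilon)$ denotes the solution of VI$(K,F(\cdot;\theta)+\epsilon\mathbf{I})$, then $x(\theta,\epsilon)$ is Lipschitz continuous in $\theta$ and $\epsilon$.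
   Context: VI$(K,G)$ asks for $x\in K$ with $(y-x)^TG(x)\ge0$ for all $y\in K$. $F(\cdot;\theta)+\epsilon\mathbf{I}$ denotes $x\mapsto F(x;\theta)+\epsilon x$. $F(\cdot;\theta)$ is the gradient map of the Cournot game with price $\theta-b^*X^\sigma$ in which firm $i$ minimizes $c_i(x_i)-(\theta-b^*X^\sigma)x_i$; here the intercept $a=\theta$ is the parameter. *)

theory Defs
  imports "HOL-Analysis.Analysis"
begin

definition solves_VI :: "('a::real_inner) set \<Rightarrow> ('a \<Rightarrow> 'a) \<Rightarrow> 'a \<Rightarrow> bool" where
  "solves_VI K G x \<longleftrightarrow> x \<in> K \<and> (\<forall>y\<in>K. (y - x) \<bullet> G x \<ge> 0)"

definition total_output :: "real ^ 'n \<Rightarrow> real" where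
  "total_output x = (\<Sum>i\<in>UNIV. x $ i)"

text \<open>Gradient map of the Cournot game with inverse demand theta - b X^sigma;
  dc i is the derivative c_i' of the cost function of firm i.\<close>
definition cournot_F ::
  "('n::finite \<Rightarrow> real \<Rightarrow> real) \<Rightarrow> real \<Rightarrow> real \<Rightarrow> real ^ 'n \<Rightarrow> real \<Rightarrow> real ^ 'n" where
  "cournot_F dc b \<sigma> x \<theta> =
     (\<chi> i. dc i (x $ i) - (\<theta> - b * total_output x powr \<sigma>)
            + \<sigma> * b * total_output x powr (\<sigma> - 1) * x $ i)"

definition prod_set :: "('n::finite \<Rightarrow> real set) \<Rightarrow> (real ^ 'n) set" where
  "prod_set Ks = {x. \<forall>i. x $ i \<in> Ks i}"

end

theory Submission
  imports Defs
begin


lemma mono_dc: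
  fixes f f' :: "real \<Rightarrow> real"
  assumes der: "\<And>t. t \<ge> 0 \<Longrightarrow> (f has_real_derivative f' t) (at t within {0..})"
    and cont: "continuous_on {0..} f'" and cvx: "convex_on {0..} f"
    and st: "0 \<le> s" "s \<le> t"
  shows "f' s \<le> f' t"
proof -
  have key: "f' s \<le> f' t" if "0 < s" "s < t" for s t
  proof -
    have "f t - f s \<ge> f' s * (t - s)"
      by (rule convex_on_imp_above_tangent[where A="{0..}"]) (use that der cvx in auto)
    moreover have "f s - f t \<ge> f' t * (s - t)"
      by (rule convex_on_imp_above_tangent[where A="{0..}"]) (use that der cvx in auto)
    ultimately have "(f' t - f' s) * (t - s) \<ge> 0" by (simp add: algebra_simps)
    with that show ?thesis by (simp add: zero_le_mult_iff)
  qed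
  show ?thesis
  proof (cases "s = t")
    case True then show ?thesis by simp
  next
    case False
    with st have lt: "s < t" by simp
    show ?thesis
    proof (cases "s = 0")
      case False with st lt show ?thesis using key by simp
    next
      case True
      have "(f' \<longlongrightarrow> f' 0) (at 0 within {0..})"
        using cont unfolding continuous_on_def by auto
      then have lim: "(f' \<longlongrightarrow> f' 0) (at_right 0)"
        by (rule tendsto_within_subset) auto
      have "eventually (\<lambda>y. f' y \<le> f' t) (at_right 0)"
        using eventually_at_right_real[of 0 t] lt True
        by (auto elim!: eventually_mono intro: key)
      then have "f' 0 \<le> f' t"
        by (rule tendsto_upperbound[OF lim]) simp
      then show ?thesis using True by simp
    qed
  qed
qed

lemma vi_coord:
  fixes G :: "real^'n::finite \<Rightarrow> real^'n"
  assumes "solves_VI (prod_set Ks) G x" "t \<in> Ks i"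
  shows "(t - x$i) * (G x)$i \<ge> 0"
proof -
  define y where "y = (\<chi> j. if j = i then t else x$j)"
  have "y \<in> prod_set Ks" using assms unfolding solves_VI_def prod_set_def y_def by auto
  hence "(y - x) \<bullet> G x \<ge> 0" using assms by (auto simp: solves_VI_def)
  moreover have "y - x = axis i (t - x$i)"
    by (simp add: vec_eq_iff axis_def y_def)
  ultimately show ?thesis by (simp add: inner_axis')
qed

lemma core:
  fixes x x' :: "real^'n::finite" and dc :: "'n \<Rightarrow> real \<Rightarrow> real"
  assumes b_pos: "b > 0" and sig: "\<sigma> > 1" and eta: "\<eta> > 0"
    and mono: "\<And>i s t. 0 \<le> s \<Longrightarrow> s \<le> t \<Longrightarrow> dc i s \<le> dc i t"
    and Ksub: "\<And>i. Ks i \<subseteq> {0..}"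
    and Xge: "\<And>x. x \<in> prod_set Ks \<Longrightarrow> total_output x \<ge> \<eta>"
    and Mb: "\<And>i t. t \<in> Ks i \<Longrightarrow> \<bar>t\<bar> \<le> M"
    and s1: "solves_VI (prod_set Ks) (\<lambda>x. cournot_F dc b \<sigma> x \<theta> + \<epsilon> *\<^sub>R x) x"
    and s2: "solves_VI (prod_set Ks) (\<lambda>x. cournot_F dc b \<sigma> x \<theta>' + \<epsilon>' *\<^sub>R x) x'"
    and eps: "0 \<le> \<epsilon>" and XX: "total_output x \<le> total_output x'"
  shows "\<bar>x'$i - x$i\<bar> * (\<sigma>*b*\<eta> powr (\<sigma>-1)) \<le> (2+\<sigma>)*(\<bar>\<theta>'-\<theta>\<bar> + M*\<bar>\<epsilon>'-\<epsilon>\<bar>)"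
proof -
  define X where "X = total_output x"
  define X' where "X' = total_output x'"
  define P where "P = b * X powr \<sigma>"
  define P' where "P' = b * X' powr \<sigma>"
  define Q where "Q = \<sigma> * b * X powr (\<sigma>-1)"
  define Q' where "Q' = \<sigma> * b * X' powr (\<sigma>-1)"
  define Q0 where "Q0 = \<sigma>*b*\<eta> powr (\<sigma>-1)"
  define R where "R = \<bar>\<theta>'-\<theta>\<bar> + M*\<bar>\<epsilon>'-\<epsilon>\<bar>"
  have comp: "\<And>j. (cournot_F dc b \<sigma> x \<theta> + \<epsilon> *\<^sub>R x)$j = dc j (x$j) - (\<theta> - P) + Q * x$j + \<epsilon> * x$j"
    by (simp add: cournot_F_def P_def Q_def X_def)
  have comp': "\<And>j. (cournot_F dc b \<sigma> x' \<theta>' + \<epsilon>' *\<^sub>R x')$j = dc j (x'$j) - (\<theta>' - P') + Q' * x'$j + \<epsilon>' * x'$j"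
    by (simp add: cournot_F_def P'_def Q'_def X'_def)
  have xin: "x \<in> prod_set Ks" and xin': "x' \<in> prod_set Ks" using s1 s2 by (auto simp: solves_VI_def)
  have inK: "\<And>j. x$j \<in> Ks j" "\<And>j. x'$j \<in> Ks j" using xin xin' by (auto simp: prod_set_def)
  have nn: "\<And>j. 0 \<le> x$j" "\<And>j. 0 \<le> x'$j" using inK Ksub by force+
  have Xeta: "\<eta> \<le> X" "\<eta> \<le> X'" using Xge xin xin' X_def X'_def by auto
  have v1: "\<And>j. (x'$j - x$j) * (dc j (x$j) - (\<theta> - P) + Q * x$j + \<epsilon> * x$j) \<ge> 0"
    using vi_coord[OF s1 inK(2)] comp by simp
  have v2: "\<And>j. (x$j - x'$j) * (dc j (x'$j) - (\<theta>' - P') + Q' * x'$j + \<epsilon>' * x'$j) \<ge> 0"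
    using vi_coord[OF s2 inK(1)] comp' by simp
  have PP: "P \<le> P'" unfolding P_def P'_def
    using b_pos sig Xeta eta XX X_def X'_def by (auto intro!: mult_left_mono powr_mono2)
  have QQ: "Q \<le> Q'" unfolding Q_def Q'_def
    using b_pos sig Xeta eta XX X_def X'_def by (auto intro!: mult_left_mono powr_mono2)
  have Q0Q: "Q0 \<le> Q" unfolding Q_def Q0_def
    using b_pos sig Xeta eta by (auto intro!: mult_left_mono powr_mono2)
  have Q0pos: "Q0 > 0" unfolding Q0_def using b_pos sig eta by auto
  have Xp: "X > 0" "X' > 0" using Xeta eta by auto
  have e1: "X' powr (\<sigma>-1) * X' = X' powr \<sigma>"
    using Xp powr_add[of X' "\<sigma>-1" 1] by simp
  have e2: "X powr (\<sigma>-1) * X = X powr \<sigma>"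
    using Xp powr_add[of X "\<sigma>-1" 1] by simp
  have e3: "X powr (\<sigma>-1) * X \<le> X powr (\<sigma>-1) * X'"
    using XX X_def X'_def by (intro mult_left_mono) auto
  have key5: "(Q' - Q) * X' \<le> \<sigma> * (P' - P)"
  proof -
    have "(Q' - Q) * X' = \<sigma> * b * (X' powr (\<sigma>-1) * X' - X powr (\<sigma>-1) * X')"
      unfolding Q_def Q'_def by (simp add: algebra_simps)
    also have "\<dots> \<le> \<sigma> * b * (X' powr \<sigma> - X powr \<sigma>)"
    proof (rule mult_left_mono)
      show "X' powr (\<sigma>-1) * X' - X powr (\<sigma>-1) * X' \<le> X' powr \<sigma> - X powr \<sigma>"
        using e1 e2 e3 by linarith
      show "0 \<le> \<sigma> * b" using b_pos sig by simp
    qed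
    also have "\<dots> = \<sigma> * (P' - P)" unfolding P_def P'_def by (simp add: algebra_simps)
    finally show ?thesis .
  qed
  have xle: "x'$j \<le> X'" for j
  proof -
    have "x'$j \<le> (\<Sum>k\<in>UNIV. x'$k)" by (rule member_le_sum) (simp_all add: nn)
    then show ?thesis by (simp add: X'_def total_output_def)
  qed
  have Mnn: "M \<ge> 0" using Mb[OF inK(1)] abs_ge_zero order_trans by blast
  have Rnn: "R \<ge> 0" unfolding R_def using Mnn by simp
  have epsb: "\<And>j. \<bar>(\<epsilon>' - \<epsilon>) * x'$j\<bar> \<le> M * \<bar>\<epsilon>'-\<epsilon>\<bar>"
    using Mb[OF inK(2)] by (simp add: abs_mult mult.commute mult_right_mono)
  have plus: "Q0*(x'$j - x$j) \<le> R \<and> P' - P \<le> R" if lt: "x$j < x'$j" for j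
  proof -
    have F: "dc j (x$j) - (\<theta> - P) + Q * x$j + \<epsilon> * x$j \<ge> 0"
      using v1[of j] lt by (simp add: zero_le_mult_iff)
    have F': "dc j (x'$j) - (\<theta>' - P') + Q' * x'$j + \<epsilon>' * x'$j \<le> 0"
      using v2[of j] lt by (simp add: zero_le_mult_iff)
    have d: "dc j (x$j) \<le> dc j (x'$j)" using mono nn lt by simp
    have a1: "Q * x'$j \<le> Q' * x'$j" using QQ nn by (simp add: mult_right_mono)
    have a2: "Q0*(x'$j - x$j) \<le> Q*(x'$j - x$j)" using Q0Q lt by (simp add: mult_right_mono)
    have a3: "\<epsilon> * x$j \<le> \<epsilon> * x'$j" using eps lt by (simp add: mult_left_mono)
    have a4: "Q0*(x'$j - x$j) \<ge> 0" using Q0pos lt by simp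
    show ?thesis using F F' d a1 a2 a3 a4 epsb[of j] PP unfolding R_def
      by (simp add: algebra_simps) linarith
  qed
  have minus: "Q0*(x$j - x'$j) \<le> (2+\<sigma>)*R" if lt: "x'$j < x$j" and PR: "P' - P \<le> R" for j
  proof -
    have F: "dc j (x$j) - (\<theta> - P) + Q * x$j + \<epsilon> * x$j \<le> 0"
      using v1[of j] lt by (simp add: zero_le_mult_iff)
    have F': "dc j (x'$j) - (\<theta>' - P') + Q' * x'$j + \<epsilon>' * x'$j \<ge> 0"
      using v2[of j] lt by (simp add: zero_le_mult_iff)
    have d: "dc j (x'$j) \<le> dc j (x$j)" using mono nn lt by simp
    have a2: "Q0*(x$j - x'$j) \<le> Q*(x$j - x'$j)" using Q0Q lt by (simp add: mult_right_mono)
    have a3: "\<epsilon> * x'$j \<le> \<epsilon> * x$j" using eps lt by (simp add: mult_left_mono)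
    have a5: "(Q' - Q) * x'$j \<le> (Q' - Q) * X'" using QQ xle by (simp add: mult_left_mono)
    have a6: "\<sigma> * (P' - P) \<le> \<sigma> * R" using PR sig by simp
    have a7: "\<theta> - \<theta>' \<le> \<bar>\<theta>'-\<theta>\<bar>" by simp
    have a8: "(\<epsilon>' - \<epsilon>) * x'$j \<le> M * \<bar>\<epsilon>'-\<epsilon>\<bar>" using epsb[of j] by simp
    show ?thesis using F F' d a2 a3 a5 a6 a7 a8 PR key5 unfolding R_def
      by (simp add: algebra_simps)
  qed
  show ?thesis
  proof (cases "\<exists>j. x$j < x'$j")
    case True
    then obtain j where "x$j < x'$j" by auto
    with plus have PR: "P' - P \<le> R" by blast
    consider "x$i < x'$i" | "x'$i < x$i" | "x$i = x'$i" by linarith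
    then show ?thesis
    proof cases
      case 1 then have "Q0*(x'$i - x$i) \<le> R" using plus by blast
      have "\<bar>x'$i - x$i\<bar> * Q0 = Q0*(x'$i - x$i)" using 1 by simp
      also have "\<dots> \<le> R" by fact
      also have "R = 1 * R" by simp
      also have "\<dots> \<le> (2+\<sigma>)*R" using Rnn sig by (intro mult_right_mono) auto
      finally show ?thesis unfolding Q0_def R_def .
    next
      case 2 then have "Q0*(x$i - x'$i) \<le> (2+\<sigma>)*R" using minus PR by blast
      moreover have "\<bar>x'$i - x$i\<bar> * Q0 = Q0*(x$i - x'$i)" using 2 by (simp add: abs_if)
      ultimately have "\<bar>x'$i - x$i\<bar> * Q0 \<le> (2+\<sigma>)*R" by (simp only:)
      then show ?thesis unfolding Q0_def R_def .
    next
      case 3 then show ?thesis using Rnn sig unfolding R_def by simp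
    qed
  next
    case False
    then have le: "\<And>j. x'$j \<le> x$j" by (simp add: not_less)
    have "(\<Sum>j\<in>UNIV. x$j - x'$j) = X - X'" unfolding X_def X'_def total_output_def
      by (simp add: sum_subtractf)
    also have "\<dots> \<le> 0" using XX X_def X'_def by simp
    finally have "(\<Sum>j\<in>UNIV. x$j - x'$j) \<le> 0" .
    then have "(\<Sum>j\<in>UNIV. x$j - x'$j) = 0" using le by (smt (verit) sum_nonneg)
    then have "\<forall>j\<in>UNIV. x$j - x'$j = 0" using le by (subst (asm) sum_nonneg_eq_0_iff) auto
    then show ?thesis using Rnn sig unfolding R_def by simp
  qed
qed


theorem proposition4:
  fixes c dc :: "'n::finite \<Rightarrow> real \<Rightarrow> real"
    and Ks :: "'n \<Rightarrow> real set"
    and b \<sigma> \<delta> \<Delta> \<eta> :: real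
  assumes b_pos: "b > 0"
    and sigma_gt: "\<sigma> > 1"
    and c_deriv: "\<And>i t. t \<ge> 0 \<Longrightarrow> (c i has_real_derivative dc i t) (at t within {0..})"
    and dc_cont: "\<And>i. continuous_on {0..} (dc i)"
    and c_convex: "\<And>i. convex_on {0..} (c i)"
    and dc_lip: "\<And>i. \<exists>L. L-lipschitz_on (Ks i) (dc i)"
    and K_sub: "\<And>i. Ks i \<subseteq> {0..}"
    and K_ne: "\<And>i. Ks i \<noteq> {}"
    and K_closed: "\<And>i. closed (Ks i)"
    and K_convex: "\<And>i. convex (Ks i)"
    and K_bounded: "\<And>i. bounded (Ks i)"
    and delta: "0 < \<delta>" "\<delta> < \<Delta>"
    and eta_pos: "\<eta> > 0"
    and X_ge: "\<And>x. x \<in> prod_set Ks \<Longrightarrow> total_output x \<ge> \<eta>"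
    and N_bound: "real CARD('n) < (3 * \<sigma> - 1) / (\<sigma> - 1)"
  shows "(\<exists>L. \<forall>\<theta>1\<in>{\<delta>..\<Delta>}. \<forall>\<theta>2\<in>{\<delta>..\<Delta>}. \<forall>x1 x2.
            solves_VI (prod_set Ks) (\<lambda>x. cournot_F dc b \<sigma> x \<theta>1) x1 \<longrightarrow>
            solves_VI (prod_set Ks) (\<lambda>x. cournot_F dc b \<sigma> x \<theta>2) x2 \<longrightarrow>
            norm (x1 - x2) \<le> L * \<bar>\<theta>1 - \<theta>2\<bar>)
       \<and> (\<exists>L. \<forall>\<theta>1\<in>{\<delta>..\<Delta>}. \<forall>\<theta>2\<in>{\<delta>..\<Delta>}. \<forall>\<epsilon>1>0. \<forall>\<epsilon>2>0. \<forall>x1 x2.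
            solves_VI (prod_set Ks) (\<lambda>x. cournot_F dc b \<sigma> x \<theta>1 + \<epsilon>1 *\<^sub>R x) x1 \<longrightarrow>
            solves_VI (prod_set Ks) (\<lambda>x. cournot_F dc b \<sigma> x \<theta>2 + \<epsilon>2 *\<^sub>R x) x2 \<longrightarrow>
            norm (x1 - x2) \<le> L * (\<bar>\<theta>1 - \<theta>2\<bar> + \<bar>\<epsilon>1 - \<epsilon>2\<bar>))"
proof -
  have mono: "\<And>i s t. 0 \<le> s \<Longrightarrow> s \<le> t \<Longrightarrow> dc i s \<le> dc i t"
    using mono_dc[OF c_deriv dc_cont c_convex] by blast
  have "\<forall>i. \<exists>a. \<forall>t\<in>Ks i. norm t \<le> a" using K_bounded bounded_iff by blast
  then obtain Mi where Mi: "\<And>i t. t \<in> Ks i \<Longrightarrow> norm t \<le> Mi i" by metis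
  define M where "M = (\<Sum>i\<in>UNIV. \<bar>Mi i\<bar>)"
  have Mb: "\<bar>t\<bar> \<le> M" if "t \<in> Ks i" for i t
  proof -
    have "\<bar>t\<bar> \<le> \<bar>Mi i\<bar>" using Mi[OF that] by auto
    also have "\<bar>Mi i\<bar> \<le> M" unfolding M_def by (rule member_le_sum) auto
    finally show ?thesis .
  qed
  have Mnn: "M \<ge> 0" unfolding M_def by (simp add: sum_nonneg)
  define Q0 where "Q0 = \<sigma>*b*\<eta> powr (\<sigma>-1)"
  have Q0pos: "Q0 > 0" unfolding Q0_def using b_pos sigma_gt eta_pos by auto
  define C where "C = real CARD('n) * (2+\<sigma>) / Q0"
  have bound: "norm (x1 - x2) \<le> C * (\<bar>\<theta>1-\<theta>2\<bar> + M*\<bar>\<epsilon>1-\<epsilon>2\<bar>)"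
    if e1: "0 \<le> \<epsilon>1" and e2: "0 \<le> \<epsilon>2"
      and s1: "solves_VI (prod_set Ks) (\<lambda>x. cournot_F dc b \<sigma> x \<theta>1 + \<epsilon>1 *\<^sub>R x) x1"
      and s2: "solves_VI (prod_set Ks) (\<lambda>x. cournot_F dc b \<sigma> x \<theta>2 + \<epsilon>2 *\<^sub>R x) x2"
    for \<theta>1 \<theta>2 \<epsilon>1 \<epsilon>2 x1 x2
  proof -
    define R where "R = \<bar>\<theta>1-\<theta>2\<bar> + M*\<bar>\<epsilon>1-\<epsilon>2\<bar>"
    have coord: "\<bar>(x1 - x2)$i\<bar> \<le> (2+\<sigma>) * R / Q0" for i
    proof -
      have "\<bar>x1$i - x2$i\<bar> * Q0 \<le> (2+\<sigma>) * R"
      proof (cases "total_output x1 \<le> total_output x2")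
        case True
        from core[where i=i, OF b_pos sigma_gt eta_pos mono K_sub X_ge Mb s1 s2 e1 True]
        show ?thesis unfolding Q0_def R_def by (simp add: abs_minus_commute)
      next
        case False
        then have "total_output x2 \<le> total_output x1" by simp
        from core[where i=i, OF b_pos sigma_gt eta_pos mono K_sub X_ge Mb s2 s1 e2 this]
        show ?thesis unfolding Q0_def R_def by simp
      qed
      then show ?thesis using Q0pos by (simp add: pos_le_divide_eq)
    qed
    have "norm (x1 - x2) \<le> (\<Sum>i\<in>UNIV. \<bar>(x1 - x2)$i\<bar>)" by (rule norm_le_l1_cart)
    also have "\<dots> \<le> (\<Sum>i\<in>(UNIV::'n set). (2+\<sigma>) * R / Q0)" by (rule sum_mono) (rule coord)
    also have "\<dots> = C * R" unfolding C_def by simp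
    finally show ?thesis unfolding R_def .
  qed
  have Cnn: "C \<ge> 0" unfolding C_def using Q0pos sigma_gt by simp
  show ?thesis
  proof (intro conjI)
    show "\<exists>L. \<forall>\<theta>1\<in>{\<delta>..\<Delta>}. \<forall>\<theta>2\<in>{\<delta>..\<Delta>}. \<forall>x1 x2.
            solves_VI (prod_set Ks) (\<lambda>x. cournot_F dc b \<sigma> x \<theta>1) x1 \<longrightarrow>
            solves_VI (prod_set Ks) (\<lambda>x. cournot_F dc b \<sigma> x \<theta>2) x2 \<longrightarrow>
            norm (x1 - x2) \<le> L * \<bar>\<theta>1 - \<theta>2\<bar>"
    proof (intro exI ballI allI impI)
      fix \<theta>1 \<theta>2 x1 x2
      assume "solves_VI (prod_set Ks) (\<lambda>x. cournot_F dc b \<sigma> x \<theta>1) x1"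
        "solves_VI (prod_set Ks) (\<lambda>x. cournot_F dc b \<sigma> x \<theta>2) x2"
      then show "norm (x1 - x2) \<le> C * \<bar>\<theta>1 - \<theta>2\<bar>"
        using bound[of 0 0 \<theta>1 x1 \<theta>2 x2] by simp
    qed
    show "\<exists>L. \<forall>\<theta>1\<in>{\<delta>..\<Delta>}. \<forall>\<theta>2\<in>{\<delta>..\<Delta>}. \<forall>\<epsilon>1>0. \<forall>\<epsilon>2>0. \<forall>x1 x2.
            solves_VI (prod_set Ks) (\<lambda>x. cournot_F dc b \<sigma> x \<theta>1 + \<epsilon>1 *\<^sub>R x) x1 \<longrightarrow>
            solves_VI (prod_set Ks) (\<lambda>x. cournot_F dc b \<sigma> x \<theta>2 + \<epsilon>2 *\<^sub>R x) x2 \<longrightarrow>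
            norm (x1 - x2) \<le> L * (\<bar>\<theta>1 - \<theta>2\<bar> + \<bar>\<epsilon>1 - \<epsilon>2\<bar>)"
    proof (intro exI ballI allI impI)
      fix \<theta>1 \<theta>2 x1 x2 \<epsilon>1 \<epsilon>2 :: real
      fix x1 x2
      assume e: "\<epsilon>1 > 0" "\<epsilon>2 > 0"
        and s: "solves_VI (prod_set Ks) (\<lambda>x. cournot_F dc b \<sigma> x \<theta>1 + \<epsilon>1 *\<^sub>R x) x1"
        "solves_VI (prod_set Ks) (\<lambda>x. cournot_F dc b \<sigma> x \<theta>2 + \<epsilon>2 *\<^sub>R x) x2"
      have "norm (x1 - x2) \<le> C * (\<bar>\<theta>1-\<theta>2\<bar> + M*\<bar>\<epsilon>1-\<epsilon>2\<bar>)"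
        using bound[of \<epsilon>1 \<epsilon>2 \<theta>1 x1 \<theta>2 x2] e s by simp
      also have "\<dots> \<le> C * ((1+M) * (\<bar>\<theta>1-\<theta>2\<bar> + \<bar>\<epsilon>1-\<epsilon>2\<bar>))"
        using Cnn Mnn by (intro mult_left_mono) (auto simp: algebra_simps)
      finally show "norm (x1 - x2) \<le> (C * (1+M)) * (\<bar>\<theta>1 - \<theta>2\<bar> + \<bar>\<epsilon>1 - \<epsilon>2\<bar>)"
        by (simp add: mult.assoc)
    qed
  qed
qed

end
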